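(* There exist infinite diameter, infinite valence graphs $\mathcal G$ that are quasi-isometric to trees but whose Rips complex $R_d(\mathcal G)$ is not $CAT(0)$ for any $d$.
   Context: For a graph $\mathcal G$ and $d>0$, the Rips complex $R_d(\mathcal G)$ is the simplicial complex whose vertices are the vertices of $\mathcal G$ and whose simplices are the finite sets of vertices with pairwise distance $\le d$ in $\mathcal G$ (metrized as a piecewise Euclidean complex with regular simplices). *)

theory Defs
  imports "HOL-Analysis.Analysis"
begin

definition simple_graph :: "'v set \<Rightarrow> ('v \<Rightarrow> 'v \<Rightarrow> bool) \<Rightarrow> bool" where
  "simple_graph V E \<longleftrightarrow> V \<noteq> {} \<and> (\<forall>u v. E u v \<longrightarrow> u \<in> V \<and> v \<in> V)
     \<and> (\<forall>u v. E u v \<longrightarrow> E v u) \<and> (\<forall>u. \<not> E u u)"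

definition walk :: "'v set \<Rightarrow> ('v \<Rightarrow> 'v \<Rightarrow> bool) \<Rightarrow> 'v list \<Rightarrow> bool" where
  "walk V E xs \<longleftrightarrow> xs \<noteq> [] \<and> set xs \<subseteq> V \<and> (\<forall>i < length xs - 1. E (xs ! i) (xs ! Suc i))"

definition connected_graph :: "'v set \<Rightarrow> ('v \<Rightarrow> 'v \<Rightarrow> bool) \<Rightarrow> bool" where
  "connected_graph V E \<longleftrightarrow> (\<forall>u\<in>V. \<forall>v\<in>V. \<exists>xs. walk V E xs \<and> hd xs = u \<and> last xs = v)"

definition gdist :: "'v set \<Rightarrow> ('v \<Rightarrow> 'v \<Rightarrow> bool) \<Rightarrow> 'v \<Rightarrow> 'v \<Rightarrow> nat" where
  "gdist V E u v = (LEAST n. \<exists>xs. walk V E xs \<and> hd xs = u \<and> last xs = v \<and> length xs = Suc n)"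

definition has_cycle :: "'v set \<Rightarrow> ('v \<Rightarrow> 'v \<Rightarrow> bool) \<Rightarrow> bool" where
  "has_cycle V E \<longleftrightarrow> (\<exists>xs. walk V E xs \<and> distinct xs \<and> length xs \<ge> 3 \<and> E (last xs) (hd xs))"

definition is_tree :: "'v set \<Rightarrow> ('v \<Rightarrow> 'v \<Rightarrow> bool) \<Rightarrow> bool" where
  "is_tree V E \<longleftrightarrow> simple_graph V E \<and> connected_graph V E \<and> \<not> has_cycle V E"

definition quasi_isometric ::
  "'v set \<Rightarrow> ('v \<Rightarrow> 'v \<Rightarrow> bool) \<Rightarrow> 'w set \<Rightarrow> ('w \<Rightarrow> 'w \<Rightarrow> bool) \<Rightarrow> bool" where
  "quasi_isometric V E W F \<longleftrightarrow>
     (\<exists>f lam C. lam \<ge> 1 \<and> C \<ge> 0 \<and> f ` V \<subseteq> W \<and>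
        (\<forall>x\<in>V. \<forall>y\<in>V.
           real (gdist V E x y) / lam - C \<le> real (gdist W F (f x) (f y)) \<and>
           real (gdist W F (f x) (f y)) \<le> lam * real (gdist V E x y) + C) \<and>
        (\<forall>z\<in>W. \<exists>x\<in>V. real (gdist W F (f x) z) \<le> C))"

definition rips_simplex :: "'v set \<Rightarrow> ('v \<Rightarrow> 'v \<Rightarrow> bool) \<Rightarrow> real \<Rightarrow> 'v set \<Rightarrow> bool" where
  "rips_simplex V E d S \<longleftrightarrow> finite S \<and> S \<noteq> {} \<and> S \<subseteq> V \<and>
     (\<forall>u\<in>S. \<forall>v\<in>S. real (gdist V E u v) \<le> d)"

definition bsupp :: "('v \<Rightarrow> real) \<Rightarrow> 'v set" where
  "bsupp x = {v. x v \<noteq> 0}"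

text \<open>Points of the geometric realization, in barycentric coordinates.\<close>
definition rips_points :: "'v set \<Rightarrow> ('v \<Rightarrow> 'v \<Rightarrow> bool) \<Rightarrow> real \<Rightarrow> ('v \<Rightarrow> real) set" where
  "rips_points V E d = {x. (\<forall>v. x v \<ge> 0) \<and> rips_simplex V E d (bsupp x) \<and> sum x (bsupp x) = 1}"

text \<open>Euclidean distance inside a common regular simplex with edge length 1
  (vertex v realised as the point e_v / sqrt 2).\<close>
definition simplex_dist :: "('v \<Rightarrow> real) \<Rightarrow> ('v \<Rightarrow> real) \<Rightarrow> real" where
  "simplex_dist x y = sqrt ((\<Sum>v\<in>bsupp x \<union> bsupp y. (x v - y v)^2) / 2)"

text \<open>Intrinsic (length) metric: infimum of lengths of strings of points,
  consecutive points lying in a common simplex.\<close>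
definition rips_chain :: "'v set \<Rightarrow> ('v \<Rightarrow> 'v \<Rightarrow> bool) \<Rightarrow> real \<Rightarrow> ('v \<Rightarrow> real) list \<Rightarrow> bool" where
  "rips_chain V E d ps \<longleftrightarrow> ps \<noteq> [] \<and> set ps \<subseteq> rips_points V E d \<and>
     (\<forall>i < length ps - 1. rips_simplex V E d (bsupp (ps ! i) \<union> bsupp (ps ! Suc i)))"

definition rips_dist :: "'v set \<Rightarrow> ('v \<Rightarrow> 'v \<Rightarrow> bool) \<Rightarrow> real \<Rightarrow> ('v \<Rightarrow> real) \<Rightarrow> ('v \<Rightarrow> real) \<Rightarrow> real" where
  "rips_dist V E d x y = Inf {(\<Sum>i < length ps - 1. simplex_dist (ps ! i) (ps ! Suc i)) | ps.
        rips_chain V E d ps \<and> hd ps = x \<and> last ps = y}"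

definition is_metric_on :: "'p set \<Rightarrow> ('p \<Rightarrow> 'p \<Rightarrow> real) \<Rightarrow> bool" where
  "is_metric_on X dd \<longleftrightarrow> (\<forall>x\<in>X. \<forall>y\<in>X. dd x y \<ge> 0 \<and> (dd x y = 0 \<longleftrightarrow> x = y) \<and> dd x y = dd y x) \<and>
     (\<forall>x\<in>X. \<forall>y\<in>X. \<forall>z\<in>X. dd x z \<le> dd x y + dd y z)"

definition geodesic_seg :: "'p set \<Rightarrow> ('p \<Rightarrow> 'p \<Rightarrow> real) \<Rightarrow> (real \<Rightarrow> 'p) \<Rightarrow> 'p \<Rightarrow> 'p \<Rightarrow> bool" where
  "geodesic_seg X dd g x y \<longleftrightarrow> g 0 = x \<and> g (dd x y) = y \<and> (\<forall>s\<in>{0..dd x y}. g s \<in> X) \<and>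
     (\<forall>s\<in>{0..dd x y}. \<forall>t\<in>{0..dd x y}. dd (g s) (g t) = \<bar>s - t\<bar>)"

definition geodesic_space :: "'p set \<Rightarrow> ('p \<Rightarrow> 'p \<Rightarrow> real) \<Rightarrow> bool" where
  "geodesic_space X dd \<longleftrightarrow> is_metric_on X dd \<and> (\<forall>x\<in>X. \<forall>y\<in>X. \<exists>g. geodesic_seg X dd g x y)"

text \<open>CAT(0): geodesic, and every geodesic triangle (vertices x 0, x 1, x 2, sides g i from
  x i to x (i+1 mod 3)) is no fatter than its Euclidean comparison triangle P 0, P 1, P 2
  in the plane (here the complex plane).\<close>
definition CAT0 :: "'p set \<Rightarrow> ('p \<Rightarrow> 'p \<Rightarrow> real) \<Rightarrow> bool" where
  "CAT0 X dd \<longleftrightarrow> geodesic_space X dd \<and>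
    (\<forall>(x :: nat \<Rightarrow> 'p) (g :: nat \<Rightarrow> real \<Rightarrow> 'p) (P :: nat \<Rightarrow> complex).
       (\<forall>i<3. x i \<in> X) \<longrightarrow>
       (\<forall>i<3. geodesic_seg X dd (g i) (x i) (x (Suc i mod 3))) \<longrightarrow>
       (\<forall>i<3. cmod (P (Suc i mod 3) - P i) = dd (x i) (x (Suc i mod 3))) \<longrightarrow>
       (\<forall>i<3. \<forall>j<3. \<forall>s\<in>{0..dd (x i) (x (Suc i mod 3))}. \<forall>t\<in>{0..dd (x j) (x (Suc j mod 3))}.
          dd (g i s) (g j t) \<le>
          cmod ((P i + of_real (s / dd (x i) (x (Suc i mod 3))) * (P (Suc i mod 3) - P i))
              - (P j + of_real (t / dd (x j) (x (Suc j mod 3))) * (P (Suc j mod 3) - P j)))))"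

end

theory Submission
  imports Defs "HOL-Library.Nat_Bijection"
begin


definition lev :: "nat \<Rightarrow> nat" where "lev n = fst (prod_decode n)"
definition enc :: "nat \<Rightarrow> nat \<Rightarrow> nat" where "enc k j = prod_encode (k, j)"
definition GE :: "nat \<Rightarrow> nat \<Rightarrow> bool" where
  "GE u v \<longleftrightarrow> lev u = Suc (lev v) \<or> lev v = Suc (lev u)"
definition PE :: "nat \<Rightarrow> nat \<Rightarrow> bool" where
  "PE a b \<longleftrightarrow> a = Suc b \<or> b = Suc a"

lemma lev_enc[simp]: "lev (enc k j) = k"
  by (simp add: lev_def enc_def prod_encode_inverse)

lemma enc_inj: "inj (enc k)"
  by (auto simp: inj_def enc_def)

lemma walk_single: "walk V E [x] \<longleftrightarrow> x \<in> V"
  by (simp add: walk_def)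

lemma walk_Cons2: "walk V E (x # y # ys) \<longleftrightarrow> x \<in> V \<and> E x y \<and> walk V E (y # ys)"
  unfolding walk_def by (auto simp: All_less_Suc2)

lemma walk_rev:
  assumes sym: "\<And>u v. E u v \<Longrightarrow> E v u" and w: "walk V E xs"
  shows "walk V E (rev xs)"
proof -
  have "E (rev xs ! i) (rev xs ! Suc i)" if i: "i < length xs - 1" for i
  proof -
    define j where "j = length xs - Suc (Suc i)"
    have j1: "j < length xs - 1" using i by (simp add: j_def)
    have j2: "length xs - Suc i = Suc j" using i by (simp add: j_def)
    have "E (xs ! j) (xs ! Suc j)"
      using w j1 unfolding walk_def by blast
    moreover have "rev xs ! i = xs ! Suc j"
      using i j2 by (simp add: rev_nth)
    moreover have "rev xs ! Suc i = xs ! j"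
      using i by (simp add: rev_nth j_def)
    ultimately show ?thesis using sym by simp
  qed
  then show ?thesis using w unfolding walk_def by auto
qed

lemma walk_h:
  assumes h: "\<And>u v. E u v \<Longrightarrow> h u \<le> Suc (h v) \<and> h v \<le> Suc (h u)"
    and w: "walk V E xs"
  shows "h (last xs) \<le> h (hd xs) + (length xs - 1) \<and> h (hd xs) \<le> h (last xs) + (length xs - 1)"
proof -
  have ne: "xs \<noteq> []" using w by (simp add: walk_def)
  have "i < length xs \<Longrightarrow> h (xs ! i) \<le> h (xs ! 0) + i \<and> h (xs ! 0) \<le> h (xs ! i) + i" for i
  proof (induction i)
    case 0 then show ?case by simp
  next
    case (Suc i)
    then have "E (xs ! i) (xs ! Suc i)" using w unfolding walk_def by auto
    then show ?case using Suc h[of "xs ! i" "xs ! Suc i"] by fastforce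
  qed
  from this[of "length xs - 1"] ne show ?thesis
    by (simp add: hd_conv_nth last_conv_nth)
qed

lemma gdist_lower:
  assumes h: "\<And>u v. E u v \<Longrightarrow> h u \<le> Suc (h v) \<and> h v \<le> Suc (h u)"
    and ex: "\<exists>xs. walk V E xs \<and> hd xs = a \<and> last xs = b"
  shows "h b \<le> h a + gdist V E a b \<and> h a \<le> h b + gdist V E a b"
proof -
  obtain xs where xs: "walk V E xs" "hd xs = a" "last xs = b" using ex by blast
  then have "length xs = Suc (length xs - 1)" by (cases xs) (auto simp: walk_def)
  then have "\<exists>n. \<exists>xs. walk V E xs \<and> hd xs = a \<and> last xs = b \<and> length xs = Suc n"
    using xs by blast
  from LeastI_ex[OF this] obtain ys where
    ys: "walk V E ys" "hd ys = a" "last ys = b" "length ys = Suc (gdist V E a b)"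
    unfolding gdist_def by blast
  show ?thesis using walk_h[OF h ys(1)] ys by simp
qed

lemma gdist_upper:
  assumes "walk V E xs" "hd xs = u" "last xs = v"
  shows "gdist V E u v \<le> length xs - 1"
proof -
  have "length xs = Suc (length xs - 1)" using assms by (cases xs) (auto simp: walk_def)
  then show ?thesis unfolding gdist_def using assms by (intro Least_le) blast
qed

fun ch :: "nat \<Rightarrow> nat \<Rightarrow> nat \<Rightarrow> nat list" where
  "ch a 0 w = [w]"
| "ch a (Suc n) w = enc a 0 # ch (Suc a) n w"

lemma ch_walk:
  "n \<ge> 1 \<Longrightarrow> lev w + 2 = a + n \<Longrightarrow>
    walk UNIV GE (ch a n w) \<and> hd (ch a n w) = enc a 0 \<and> last (ch a n w) = w \<and> length (ch a n w) = Suc n"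
proof (induction n arbitrary: a)
  case 0 then show ?case by simp
next
  case (Suc n)
  show ?case
  proof (cases n)
    case 0
    then show ?thesis using Suc.prems by (simp add: walk_Cons2 walk_single GE_def)
  next
    case (Suc m)
    have IH: "walk UNIV GE (ch (Suc a) n w) \<and> hd (ch (Suc a) n w) = enc (Suc a) 0 \<and>
       last (ch (Suc a) n w) = w \<and> length (ch (Suc a) n w) = Suc n"
      using Suc.IH[of "Suc a"] Suc.prems Suc by simp
    then obtain r where r: "ch (Suc a) n w = enc (Suc a) 0 # r" by (cases "ch (Suc a) n w") auto
    have e: "GE (enc a 0) (enc (Suc a) 0)" by (simp add: GE_def)
    show ?thesis unfolding ch.simps(2) r using IH[unfolded r] e by (simp add: walk_Cons2)
  qed
qed

lemma G_walk_le:
  assumes "lev u \<le> lev v"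
  shows "\<exists>xs. walk UNIV GE xs \<and> hd xs = u \<and> last xs = v \<and> length xs = lev v - lev u + 3"
proof -
  define n where "n = lev v - lev u + 1"
  have c: "walk UNIV GE (ch (Suc (lev u)) n v) \<and> hd (ch (Suc (lev u)) n v) = enc (Suc (lev u)) 0 \<and>
     last (ch (Suc (lev u)) n v) = v \<and> length (ch (Suc (lev u)) n v) = Suc n"
    using ch_walk[of n v "Suc (lev u)"] assms by (simp add: n_def)
  then obtain r where r: "ch (Suc (lev u)) n v = enc (Suc (lev u)) 0 # r"
    by (cases "ch (Suc (lev u)) n v") auto
  have e: "GE u (enc (Suc (lev u)) 0)" by (simp add: GE_def)
  show ?thesis
    by (rule exI[of _ "u # ch (Suc (lev u)) n v"]) (use c[unfolded r] r e in \<open>simp add: walk_Cons2 n_def\<close>)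
qed

lemma GE_sym: "GE u v \<Longrightarrow> GE v u" by (auto simp: GE_def)

lemma G_walk:
  "\<exists>xs. walk UNIV GE xs \<and> hd xs = u \<and> last xs = v \<and>
     length xs = (if lev u \<le> lev v then lev v - lev u else lev u - lev v) + 3"
proof (cases "lev u \<le> lev v")
  case True then show ?thesis using G_walk_le[OF True] by simp
next
  case False
  then obtain xs where xs: "walk UNIV GE xs" "hd xs = v" "last xs = u" "length xs = lev u - lev v + 3"
    using G_walk_le[of v u] by auto
  then have "xs \<noteq> []" by (auto simp: walk_def)
  then show ?thesis using False xs walk_rev[OF GE_sym xs(1)]
    by (intro exI[of _ "rev xs"]) (simp add: hd_rev last_rev)
qed

lemma GE_h: "GE u v \<Longrightarrow> lev u \<le> Suc (lev v) \<and> lev v \<le> Suc (lev u)"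
  by (auto simp: GE_def)

lemma PE_h: "PE u v \<Longrightarrow> id u \<le> Suc (id v) \<and> id v \<le> Suc (id u)"
  by (auto simp: PE_def)

lemma gdistG:
  "gdist UNIV GE u v \<le> (if lev u \<le> lev v then lev v - lev u else lev u - lev v) + 2"
  "(if lev u \<le> lev v then lev v - lev u else lev u - lev v) \<le> gdist UNIV GE u v"
proof -
  obtain xs where xs: "walk UNIV GE xs" "hd xs = u" "last xs = v"
     "length xs = (if lev u \<le> lev v then lev v - lev u else lev u - lev v) + 3"
    using G_walk by blast
  show "gdist UNIV GE u v \<le> (if lev u \<le> lev v then lev v - lev u else lev u - lev v) + 2"
    using gdist_upper[OF xs(1-3)] xs(4) by simp
  show "(if lev u \<le> lev v then lev v - lev u else lev u - lev v) \<le> gdist UNIV GE u v"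
  proof -
    have "lev v \<le> lev u + gdist UNIV GE u v \<and> lev u \<le> lev v + gdist UNIV GE u v"
      using gdist_lower[of GE lev UNIV u v, OF GE_h] xs(1-3) by blast
    then show ?thesis by auto
  qed
qed

lemma P_walk_le: "a \<le> b \<Longrightarrow> walk UNIV PE [a..<Suc b]"
  by (auto simp: walk_def PE_def nth_upt simp del: upt_Suc)

lemma gdistP: "gdist UNIV PE a b = (if a \<le> b then b - a else a - b)"
proof -
  have ex: "\<exists>xs. walk UNIV PE xs \<and> hd xs = a \<and> last xs = b \<and> length xs = Suc (if a \<le> b then b - a else a - b)"
  proof (cases "a \<le> b")
    case True then show ?thesis using P_walk_le[OF True]
      by (intro exI[of _ "[a..<Suc b]"]) (simp add: hd_upt del: upt_Suc)
  next
    case False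
    have w: "walk UNIV PE (rev [b..<Suc a])" by (rule walk_rev) (use False P_walk_le in \<open>auto simp: PE_def\<close>)
    show ?thesis using False w
      by (intro exI[of _ "rev [b..<Suc a]"]) (simp add: hd_rev last_rev hd_upt del: upt_Suc)
  qed
  then obtain xs where xs: "walk UNIV PE xs" "hd xs = a" "last xs = b" "length xs = Suc (if a \<le> b then b - a else a - b)" by blast
  have "gdist UNIV PE a b \<le> (if a \<le> b then b - a else a - b)" using gdist_upper[OF xs(1-3)] xs(4) by simp
  moreover have "(if a \<le> b then b - a else a - b) \<le> gdist UNIV PE a b"
  proof -
    have "id b \<le> id a + gdist UNIV PE a b \<and> id a \<le> id b + gdist UNIV PE a b"
      using gdist_lower[of PE id UNIV a b, OF PE_h] xs(1-3) by blast
    then show ?thesis by auto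
  qed
  ultimately show ?thesis by linarith
qed



lemma PE_no_cycle: "\<not> has_cycle UNIV PE"
proof
  assume "has_cycle UNIV PE"
  then obtain xs where w: "walk UNIV PE xs" and dist: "distinct xs" and len: "length xs \<ge> 3"
    and cl: "PE (last xs) (hd xs)" unfolding has_cycle_def by blast
  define n where "n = length xs"
  define M where "M = Max (set xs)"
  have ne: "xs \<noteq> []" using len by auto
  have "M \<in> set xs" unfolding M_def using ne by (intro Max_in) auto
  then obtain k where k: "k < n" "xs ! k = M" unfolding n_def by (auto simp: in_set_conv_nth)
  have le: "xs ! i \<le> M" if "i < n" for i
    unfolding M_def using that n_def by (intro Max_ge) auto
  have nb: "Suc (xs ! i) = M" if "i < n" "PE (xs ! i) M \<or> PE M (xs ! i)" for i
    using that le[OF that(1)] by (auto simp: PE_def)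
  have step: "PE (xs ! i) (xs ! Suc i)" if "Suc i < n" for i
    using w that unfolding walk_def n_def by auto
  have wrap: "PE (xs ! (n - 1)) (xs ! 0)"
    using cl ne by (simp add: hd_conv_nth last_conv_nth n_def)
  define nx where "nx = (if Suc k < n then Suc k else 0)"
  define pv where "pv = (if k > 0 then k - 1 else n - 1)"
  have nxn: "nx < n" and pvn: "pv < n" using k len n_def by (auto simp: nx_def pv_def)
  have neq: "nx \<noteq> pv" using k len n_def by (auto simp: nx_def pv_def)
  have a1: "PE M (xs ! nx)"
  proof (cases "Suc k < n")
    case True then show ?thesis using step[of k] k by (simp add: nx_def)
  next
    case False then have "k = n - 1" using k by auto
    then show ?thesis using wrap k False by (simp add: nx_def)
  qed
  have a2: "PE (xs ! pv) M"
  proof (cases "k > 0")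
    case True then show ?thesis using step[of "k - 1"] k by (simp add: pv_def)
  next
    case False then have "k = 0" by auto
    then show ?thesis using wrap k False by (simp add: pv_def)
  qed
  have "xs ! nx = xs ! pv" using nb[OF nxn] nb[OF pvn] a1 a2 by fastforce
  then have "nx = pv" using dist nxn pvn n_def by (simp add: nth_eq_iff_index_eq)
  then show False using neq by simp
qed

lemma GE_simple: "simple_graph UNIV GE"
  by (auto simp: simple_graph_def GE_def)

lemma PE_tree: "is_tree UNIV PE"
  unfolding is_tree_def
proof (intro conjI)
  show "simple_graph UNIV PE" by (auto simp: simple_graph_def PE_def)
  show "connected_graph UNIV PE"
    unfolding connected_graph_def
  proof (intro ballI)
    fix a b :: nat
    show "\<exists>xs. walk UNIV PE xs \<and> hd xs = a \<and> last xs = b"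
    proof (cases "a \<le> b")
      case True then show ?thesis using P_walk_le[OF True]
        by (intro exI[of _ "[a..<Suc b]"]) (simp add: hd_upt del: upt_Suc)
    next
      case False
      have w: "walk UNIV PE (rev [b..<Suc a])" by (rule walk_rev) (use False P_walk_le in \<open>auto simp: PE_def\<close>)
      show ?thesis using False w
        by (intro exI[of _ "rev [b..<Suc a]"]) (simp add: hd_rev last_rev hd_upt del: upt_Suc)
    qed
  qed
  show "\<not> has_cycle UNIV PE" by (rule PE_no_cycle)
qed

lemma GE_conn: "connected_graph UNIV GE"
  unfolding connected_graph_def using G_walk by blast

lemma GE_diam: "\<exists>u\<in>UNIV. \<exists>v\<in>UNIV. gdist UNIV GE u v > n"
  using gdistG(2)[of "enc 0 0" "enc (Suc n) 0"] by (intro bexI[of _ "enc 0 0"] bexI[of _ "enc (Suc n) 0"]) auto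

lemma GE_inf: "\<exists>v\<in>UNIV. infinite {w. GE v w}"
proof (intro bexI[of _ "enc 0 0"])
  have "range (enc 1) \<subseteq> {w. GE (enc 0 0) w}" by (auto simp: GE_def)
  moreover have "infinite (range (enc 1))" using enc_inj[of 1] by (simp add: infinite_UNIV_char_0 range_inj_infinite)
  ultimately show "infinite {w. GE (enc 0 0) w}" using finite_subset by blast
qed simp

lemma GE_QI: "quasi_isometric UNIV GE UNIV PE"
proof -
  have A: "\<forall>x\<in>UNIV. \<forall>y\<in>UNIV.
     real (gdist UNIV GE x y) / 1 - 2 \<le> real (gdist UNIV PE (lev x) (lev y)) \<and>
     real (gdist UNIV PE (lev x) (lev y)) \<le> 1 * real (gdist UNIV GE x y) + 2"
  proof (intro ballI conjI)
    fix x y :: nat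
    show "real (gdist UNIV GE x y) / 1 - 2 \<le> real (gdist UNIV PE (lev x) (lev y))"
      using gdistG(1)[of x y] by (simp add: gdistP)
    show "real (gdist UNIV PE (lev x) (lev y)) \<le> 1 * real (gdist UNIV GE x y) + 2"
      using gdistG(2)[of x y] by (simp add: gdistP)
  qed
  have B: "\<forall>z\<in>UNIV. \<exists>x\<in>UNIV. real (gdist UNIV PE (lev x) z) \<le> 2"
  proof
    fix z show "\<exists>x\<in>UNIV. real (gdist UNIV PE (lev x) z) \<le> 2"
      by (rule bexI[of _ "enc z 0"]) (auto simp: gdistP)
  qed
  show ?thesis unfolding quasi_isometric_def
    by (intro exI[of _ lev] exI[of _ "1::real"] exI[of _ "2::real"]) (use A B in auto)
qed



lemma walk_map:
  assumes edge: "\<And>a b. E (\<sigma> a) (\<sigma> b) = E a b" and w: "walk UNIV E xs"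
  shows "walk UNIV E (map \<sigma> xs)"
  using w unfolding walk_def by (auto simp: edge)

lemma gdist_inv:
  assumes invol: "\<And>v. \<sigma> (\<sigma> v) = v" and edge: "\<And>a b. E (\<sigma> a) (\<sigma> b) = E a b"
  shows "gdist UNIV E (\<sigma> a) (\<sigma> b) = gdist UNIV E a b"
proof -
  have key: "\<exists>xs. walk UNIV E xs \<and> hd xs = \<sigma> a \<and> last xs = \<sigma> b \<and> length xs = Suc n"
    if h: "\<exists>xs. walk UNIV E xs \<and> hd xs = a \<and> last xs = b \<and> length xs = Suc n" for a b n
  proof -
    obtain xs where xs: "walk UNIV E xs" "hd xs = a" "last xs = b" "length xs = Suc n"
      using h by blast
    then have "xs \<noteq> []" by auto
    then show ?thesis using xs walk_map[OF edge xs(1)]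
      by (intro exI[of _ "map \<sigma> xs"]) (simp add: hd_map last_map)
  qed
  have "(\<lambda>n. \<exists>xs. walk UNIV E xs \<and> hd xs = \<sigma> a \<and> last xs = \<sigma> b \<and> length xs = Suc n) =
        (\<lambda>n. \<exists>xs. walk UNIV E xs \<and> hd xs = a \<and> last xs = b \<and> length xs = Suc n)"
  proof (rule ext, rule iffI)
    fix n assume "\<exists>xs. walk UNIV E xs \<and> hd xs = \<sigma> a \<and> last xs = \<sigma> b \<and> length xs = Suc n"
    from key[OF this] show "\<exists>xs. walk UNIV E xs \<and> hd xs = a \<and> last xs = b \<and> length xs = Suc n"
      by (simp add: invol)
  next
    fix n assume "\<exists>xs. walk UNIV E xs \<and> hd xs = a \<and> last xs = b \<and> length xs = Suc n"
    from key[OF this] show "\<exists>xs. walk UNIV E xs \<and> hd xs = \<sigma> a \<and> last xs = \<sigma> b \<and> length xs = Suc n" .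
  qed
  then show ?thesis unfolding gdist_def by simp
qed

lemma bsupp_comp:
  assumes invol: "\<And>v. \<sigma> (\<sigma> v) = v"
  shows "bsupp (z \<circ> \<sigma>) = \<sigma> ` bsupp z"
proof
  show "bsupp (z \<circ> \<sigma>) \<subseteq> \<sigma> ` bsupp z"
  proof
    fix x assume "x \<in> bsupp (z \<circ> \<sigma>)"
    then have "\<sigma> x \<in> bsupp z" by (simp add: bsupp_def)
    then show "x \<in> \<sigma> ` bsupp z" by (rule rev_image_eqI) (simp add: invol)
  qed
  show "\<sigma> ` bsupp z \<subseteq> bsupp (z \<circ> \<sigma>)" by (auto simp: bsupp_def invol)
qed

lemma inj_invol: assumes invol: "\<And>v. \<sigma> (\<sigma> v) = v" shows "inj \<sigma>"
  by (metis injI invol)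

lemma sum_comp:
  assumes invol: "\<And>v. \<sigma> (\<sigma> v) = v"
  shows "sum (f \<circ> \<sigma>) (\<sigma> ` S) = sum f S"
proof -
  have "sum (f \<circ> \<sigma>) (\<sigma> ` S) = sum ((f \<circ> \<sigma>) \<circ> \<sigma>) S"
    by (rule sum.reindex) (use inj_invol[OF invol] in \<open>auto simp: inj_on_def\<close>)
  also have "(f \<circ> \<sigma>) \<circ> \<sigma> = f" by (rule ext) (simp add: invol)
  finally show ?thesis .
qed

context
  fixes \<sigma> :: "nat \<Rightarrow> nat" and E :: "nat \<Rightarrow> nat \<Rightarrow> bool" and d :: real
  assumes invol: "\<And>v. \<sigma> (\<sigma> v) = v" and edge: "\<And>a b. E (\<sigma> a) (\<sigma> b) = E a b"
begin

lemma simplex_img: "rips_simplex UNIV E d S \<Longrightarrow> rips_simplex UNIV E d (\<sigma> ` S)"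
  unfolding rips_simplex_def by (auto simp: gdist_inv[where \<sigma>=\<sigma> and E=E, OF invol edge])

lemma points_comp: "z \<in> rips_points UNIV E d \<Longrightarrow> z \<circ> \<sigma> \<in> rips_points UNIV E d"
proof -
  assume z: "z \<in> rips_points UNIV E d"
  have "sum (z \<circ> \<sigma>) (\<sigma> ` bsupp z) = sum z (bsupp z)" by (rule sum_comp[OF invol])
  then show ?thesis using z unfolding rips_points_def
    by (auto simp: bsupp_comp[OF invol] simplex_img)
qed

lemma sdist_comp: "simplex_dist (a \<circ> \<sigma>) (b \<circ> \<sigma>) = simplex_dist a b"
proof -
  have "(\<Sum>v\<in>bsupp (a \<circ> \<sigma>) \<union> bsupp (b \<circ> \<sigma>). ((a \<circ> \<sigma>) v - (b \<circ> \<sigma>) v)^2)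
      = (\<Sum>v\<in>\<sigma> ` (bsupp a \<union> bsupp b). ((\<lambda>v. (a v - b v)^2) \<circ> \<sigma>) v)"
    by (simp add: bsupp_comp[OF invol] image_Un)
  also have "\<dots> = (\<Sum>v\<in>bsupp a \<union> bsupp b. (a v - b v)^2)"
    by (rule sum_comp[OF invol])
  finally show ?thesis unfolding simplex_dist_def by simp
qed

lemma chain_map: "rips_chain UNIV E d ps \<Longrightarrow> rips_chain UNIV E d (map (\<lambda>z. z \<circ> \<sigma>) ps)"
  unfolding rips_chain_def
proof (elim conjE, intro conjI allI impI)
  assume ne: "ps \<noteq> []" and s: "set ps \<subseteq> rips_points UNIV E d"
    and c: "\<forall>i<length ps - 1. rips_simplex UNIV E d (bsupp (ps ! i) \<union> bsupp (ps ! Suc i))"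
  show "map (\<lambda>z. z \<circ> \<sigma>) ps \<noteq> []" using ne by simp
  show "set (map (\<lambda>z. z \<circ> \<sigma>) ps) \<subseteq> rips_points UNIV E d" using s points_comp by auto
  fix i assume i: "i < length (map (\<lambda>z. z \<circ> \<sigma>) ps) - 1"
  then have "rips_simplex UNIV E d (\<sigma> ` (bsupp (ps ! i) \<union> bsupp (ps ! Suc i)))"
    using c simplex_img by simp
  then show "rips_simplex UNIV E d (bsupp (map (\<lambda>z. z \<circ> \<sigma>) ps ! i) \<union> bsupp (map (\<lambda>z. z \<circ> \<sigma>) ps ! Suc i))"
    using i by (simp add: bsupp_comp[OF invol] image_Un)
qed

lemma rdist_comp: "rips_dist UNIV E d (a \<circ> \<sigma>) (b \<circ> \<sigma>) = rips_dist UNIV E d a b"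
proof -
  have sub: "{(\<Sum>i < length ps - 1. simplex_dist (ps ! i) (ps ! Suc i)) | ps.
        rips_chain UNIV E d ps \<and> hd ps = a \<and> last ps = b} \<subseteq>
      {(\<Sum>i < length ps - 1. simplex_dist (ps ! i) (ps ! Suc i)) | ps.
        rips_chain UNIV E d ps \<and> hd ps = a \<circ> \<sigma> \<and> last ps = b \<circ> \<sigma>}" for a b
  proof
    fix r assume "r \<in> {(\<Sum>i < length ps - 1. simplex_dist (ps ! i) (ps ! Suc i)) | ps.
        rips_chain UNIV E d ps \<and> hd ps = a \<and> last ps = b}"
    then obtain ps where ps: "rips_chain UNIV E d ps" "hd ps = a" "last ps = b"
      and r: "r = (\<Sum>i < length ps - 1. simplex_dist (ps ! i) (ps ! Suc i))" by blast
    have ne: "ps \<noteq> []" using ps(1) by (simp add: rips_chain_def)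
    define qs where "qs = map (\<lambda>z. z \<circ> \<sigma>) ps"
    have "r = (\<Sum>i < length qs - 1. simplex_dist (qs ! i) (qs ! Suc i))"
      unfolding r qs_def by (rule sum.cong) (auto simp: sdist_comp)
    moreover have "rips_chain UNIV E d qs" unfolding qs_def by (rule chain_map[OF ps(1)])
    moreover have "hd qs = a \<circ> \<sigma>" "last qs = b \<circ> \<sigma>" using ne ps by (auto simp: qs_def hd_map last_map)
    ultimately show "r \<in> {(\<Sum>i < length ps - 1. simplex_dist (ps ! i) (ps ! Suc i)) | ps.
        rips_chain UNIV E d ps \<and> hd ps = a \<circ> \<sigma> \<and> last ps = b \<circ> \<sigma>}" by blast
  qed
  have cc: "(z \<circ> \<sigma>) \<circ> \<sigma> = z" for z :: "nat \<Rightarrow> real" by (rule ext) (simp add: invol)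
  have "{(\<Sum>i < length ps - 1. simplex_dist (ps ! i) (ps ! Suc i)) | ps.
        rips_chain UNIV E d ps \<and> hd ps = a \<circ> \<sigma> \<and> last ps = b \<circ> \<sigma>} =
      {(\<Sum>i < length ps - 1. simplex_dist (ps ! i) (ps ! Suc i)) | ps.
        rips_chain UNIV E d ps \<and> hd ps = a \<and> last ps = b}"
    using sub[of a b] sub[of "a \<circ> \<sigma>" "b \<circ> \<sigma>"] unfolding cc by blast
  then show ?thesis unfolding rips_dist_def by simp
qed

end



definition sw :: "nat \<Rightarrow> nat \<Rightarrow> nat \<Rightarrow> nat" where
  "sw u w v = (if v = u then w else if v = w then u else v)"

lemma sw_sw: "sw u w (sw u w v) = v" by (simp add: sw_def)

lemma lev_sw: assumes "lev u = lev w" shows "lev (sw u w a) = lev a"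
proof (cases "a = u")
  case True then show ?thesis using assms by (simp add: sw_def)
next
  case False then show ?thesis using assms by (cases "a = w") (simp_all add: sw_def)
qed

lemma GE_sw: "lev u = lev w \<Longrightarrow> GE (sw u w a) (sw u w b) = GE a b"
  unfolding GE_def by (simp only: lev_sw)

definition pt :: "nat \<Rightarrow> nat \<Rightarrow> real" where
  "pt a = (\<lambda>v. if v = a then 1 else 0)"

lemma bsupp_pt: "bsupp (pt a) = {a}" by (auto simp: bsupp_def pt_def)


lemma gdist_self_UNIV: "gdist UNIV E a a = 0"
  unfolding gdist_def
  by (rule Least_eq_0) (rule exI[of _ "[a]"], simp add: walk_def)

lemma pt_in: "d > 0 \<Longrightarrow> pt a \<in> rips_points UNIV GE d"
  unfolding rips_points_def rips_simplex_def
  by (auto simp: bsupp_pt gdist_self_UNIV) (auto simp: pt_def)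

lemma pt_sw: "p \<noteq> u \<Longrightarrow> p \<noteq> w \<Longrightarrow> pt p \<circ> sw u w = pt p"
  by (rule ext) (auto simp: pt_def sw_def)

lemma all3: "(\<forall>i<(3::nat). P i) \<longleftrightarrow> P 0 \<and> P 1 \<and> P 2"
  by (auto simp: numeral_3_eq_3 numeral_2_eq_2 less_Suc_eq)

lemma met_facts: "is_metric_on X dd \<Longrightarrow> x \<in> X \<Longrightarrow> y \<in> X \<Longrightarrow>
   dd x y \<ge> 0 \<and> (dd x y = 0 \<longleftrightarrow> x = y) \<and> dd x y = dd y x"
  by (simp add: is_metric_on_def)

lemma cat_clause:
  fixes X :: "'p set" and dd :: "'p \<Rightarrow> 'p \<Rightarrow> real" and x :: "nat \<Rightarrow> 'p" and g :: "nat \<Rightarrow> real \<Rightarrow> 'p"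
    and P :: "nat \<Rightarrow> complex"
  assumes cat: "CAT0 X dd" and h1: "\<forall>i<3. x i \<in> X"
    and h2: "\<forall>i<3. geodesic_seg X dd (g i) (x i) (x (Suc i mod 3))"
    and h3: "\<forall>i<3. cmod (P (Suc i mod 3) - P i) = dd (x i) (x (Suc i mod 3))"
  shows "\<forall>i<3. \<forall>j<3. \<forall>s\<in>{0..dd (x i) (x (Suc i mod 3))}. \<forall>t\<in>{0..dd (x j) (x (Suc j mod 3))}.
          dd (g i s) (g j t) \<le>
          cmod ((P i + of_real (s / dd (x i) (x (Suc i mod 3))) * (P (Suc i mod 3) - P i))
              - (P j + of_real (t / dd (x j) (x (Suc j mod 3))) * (P (Suc j mod 3) - P j)))"
proof -
  note A = conjunct2[OF cat[unfolded CAT0_def]]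
  note B = A[THEN spec[where x=x], THEN spec[where x=g], THEN spec[where x=P]]
  show ?thesis using mp[OF mp[OF mp[OF B h1] h2] h3] .
qed

lemma notCAT:
  assumes d: "d > 0"
  shows "\<not> CAT0 (rips_points UNIV GE d) (rips_dist UNIV GE d)"
proof
  define X where "X = rips_points UNIV GE d"
  define dd where "dd = rips_dist UNIV GE d"
  assume "CAT0 (rips_points UNIV GE d) (rips_dist UNIV GE d)"
  then have cat: "CAT0 X dd" by (simp add: X_def dd_def)
  then have met: "is_metric_on X dd" and geo: "\<forall>x\<in>X. \<forall>y\<in>X. \<exists>g. geodesic_seg X dd g x y"
    unfolding CAT0_def geodesic_space_def by auto
  define N where "N = nat \<lceil>d\<rceil> + 1"
  have Nd: "real N > d" unfolding N_def using of_nat_ceiling[of d] by simp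
  define p where "p = enc 0 0"
  define q where "q = enc N 0"
  have pq: "p \<noteq> q" unfolding p_def q_def enc_def using N_def by simp
  have gpq: "gdist UNIV GE p q \<ge> N" using gdistG(2)[of p q] by (simp add: p_def q_def)
  have pX: "pt a \<in> X" for a unfolding X_def by (rule pt_in[OF d])
  have ptne: "pt p \<noteq> pt q" proof
    assume "pt p = pt q" then have "pt p p = pt q p" by simp
    then show False using pq by (simp add: pt_def)
  qed
  obtain g where g: "geodesic_seg X dd g (pt p) (pt q)" using geo pX by blast
  define L where "L = dd (pt p) (pt q)"
  have Lpos: "L > 0" using met_facts[OF met pX pX, of p q] ptne unfolding L_def by auto
  have Lsym: "dd (pt q) (pt p) = L" using met_facts[OF met pX pX, of p q] unfolding L_def by auto
  have g0: "g 0 = pt p" and gL: "g L = pt q" and gX: "\<And>s. s \<in> {0..L} \<Longrightarrow> g s \<in> X"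
    and gd: "\<And>s t. s \<in> {0..L} \<Longrightarrow> t \<in> {0..L} \<Longrightarrow> dd (g s) (g t) = \<bar>s - t\<bar>"
    using g unfolding geodesic_seg_def L_def by auto
  define m where "m = g (L / 2)"
  have mX: "m \<in> X" unfolding m_def using Lpos by (intro gX) auto
  have dpm: "dd (pt p) m = L / 2" unfolding m_def using gd[of 0 "L/2"] Lpos g0 by auto
  have inv: "m \<circ> sw u w = m" if uw: "lev u = lev w" "u \<noteq> p" "u \<noteq> q" "w \<noteq> p" "w \<noteq> q" for u w
  proof -
    define \<sigma> where "\<sigma> = sw u w"
    have invol: "\<And>v. \<sigma> (\<sigma> v) = v" by (simp add: \<sigma>_def sw_sw)
    have edge: "\<And>a b. GE (\<sigma> a) (\<sigma> b) = GE a b" unfolding \<sigma>_def by (rule GE_sw[OF uw(1)])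
    have Xc: "z \<in> X \<Longrightarrow> z \<circ> \<sigma> \<in> X" for z unfolding X_def by (rule points_comp[where \<sigma>=\<sigma> and E=GE, OF invol edge])
    have ddc: "dd (a \<circ> \<sigma>) (b \<circ> \<sigma>) = dd a b" for a b unfolding dd_def by (rule rdist_comp[where \<sigma>=\<sigma> and E=GE, OF invol edge])
    have pp: "pt p \<circ> \<sigma> = pt p" "pt q \<circ> \<sigma> = pt q" unfolding \<sigma>_def using uw by (auto intro!: pt_sw)
    define g' where "g' t = g (L - t) \<circ> \<sigma>" for t
    have g': "geodesic_seg X dd g' (pt q) (pt p)"
      unfolding geodesic_seg_def Lsym
    proof (intro conjI ballI)
      show "g' 0 = pt q" by (simp add: g'_def gL pp)
      show "g' L = pt p" by (simp add: g'_def g0 pp)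
      fix s assume s: "s \<in> {0..L}"
      then show "g' s \<in> X" unfolding g'_def by (intro Xc gX) auto
      fix t assume t: "t \<in> {0..L}"
      show "dd (g' s) (g' t) = \<bar>s - t\<bar>" unfolding g'_def ddc using s t gd[of "L - s" "L - t"] by auto
    qed
    have dpp: "dd (pt p) (pt p) = 0" using met_facts[OF met pX pX, of p p] by auto
    have g2: "geodesic_seg X dd (\<lambda>_. pt p) (pt p) (pt p)"
      unfolding geodesic_seg_def dpp using pX dpp by auto
    define xs where "xs i = (if i = 1 then pt q else pt p)" for i :: nat
    define gs where "gs i = (if i = 0 then g else if i = 1 then g' else (\<lambda>_. pt p))" for i :: nat
    define P where "P i = (if i = 1 then complex_of_real L else 0)" for i :: nat
    have C: "\<forall>i<3. \<forall>j<3. \<forall>s\<in>{0..dd (xs i) (xs (Suc i mod 3))}. \<forall>t\<in>{0..dd (xs j) (xs (Suc j mod 3))}.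
          dd (gs i s) (gs j t) \<le>
          cmod ((P i + of_real (s / dd (xs i) (xs (Suc i mod 3))) * (P (Suc i mod 3) - P i))
              - (P j + of_real (t / dd (xs j) (xs (Suc j mod 3))) * (P (Suc j mod 3) - P j)))"
    proof -
      have h1: "\<forall>i<3. xs i \<in> X" unfolding all3 xs_def using pX by auto
      have h2: "\<forall>i<3. geodesic_seg X dd (gs i) (xs i) (xs (Suc i mod 3))"
        unfolding all3 xs_def gs_def using g g' g2 by (simp add: L_def)
      have h3: "\<forall>i<3. cmod (P (Suc i mod 3) - P i) = dd (xs i) (xs (Suc i mod 3))"
        unfolding all3 xs_def P_def using Lpos Lsym dpp by (simp add: L_def)
      show ?thesis using cat_clause[of X dd xs gs P] cat h1 h2 h3 by fast
    qed
    have e1: "dd (xs 0) (xs (Suc 0 mod 3)) = L" by (simp add: xs_def L_def)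
    have e2: "dd (xs 1) (xs (Suc 1 mod 3)) = L" by (simp add: xs_def Lsym)
    have "dd (gs 0 (L/2)) (gs 1 (L/2)) \<le>
          cmod ((P 0 + of_real ((L/2) / dd (xs 0) (xs (Suc 0 mod 3))) * (P (Suc 0 mod 3) - P 0))
              - (P 1 + of_real ((L/2) / dd (xs 1) (xs (Suc 1 mod 3))) * (P (Suc 1 mod 3) - P 1)))"
      using C[rule_format, of 0 1 "L/2" "L/2"] e1 e2 Lpos by simp
    also have "\<dots> = 0"
    proof -
      have h: "(L/2)/L = 1/2" using Lpos by simp
      have "P (Suc 0 mod 3) = of_real L" "P 0 = 0" "P (Suc 1 mod 3) = 0" "P 1 = of_real L"
        by (simp_all add: P_def)
      then show ?thesis unfolding e1 e2 h by (simp add: algebra_simps)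
    qed
    finally have "dd m (m \<circ> \<sigma>) \<le> 0" by (simp add: gs_def g'_def m_def)
    moreover have "m \<circ> \<sigma> \<in> X" using Xc mX .
    ultimately have "m = m \<circ> \<sigma>" using met_facts[OF met mX, of "m \<circ> \<sigma>"] by auto
    then show ?thesis by (simp add: \<sigma>_def)
  qed
  have mpts: "m \<in> rips_points UNIV GE d" using mX X_def by simp
  then have fin: "finite (bsupp m)" and simp: "rips_simplex UNIV GE d (bsupp m)"
    and sum1: "sum m (bsupp m) = 1"
    unfolding rips_points_def rips_simplex_def by auto
  have sub: "bsupp m \<subseteq> {p, q}"
  proof
    fix w assume wm: "w \<in> bsupp m"
    show "w \<in> {p, q}"
    proof (rule ccontr)
      assume wpq: "w \<notin> {p, q}"
      have "range (enc (lev w)) \<subseteq> bsupp m \<union> {p, q}"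
      proof
        fix y assume "y \<in> range (enc (lev w))"
        then obtain j where y: "y = enc (lev w) j" by auto
        show "y \<in> bsupp m \<union> {p, q}"
        proof (cases "y \<in> {p, q}")
          case False
          have "m \<circ> sw w y = m" using inv[of w y] wpq False y by auto
          then have "m (sw w y y) = m y" by (metis comp_apply)
          then have "m y = m w" by (cases "y = w") (simp_all add: sw_def)
          then show ?thesis using wm by (simp add: bsupp_def)
        qed auto
      qed
      moreover have "infinite (range (enc (lev w)))"
        using enc_inj by (simp add: range_inj_infinite)
      ultimately show False using fin finite_subset by blast
    qed
  qed
  have notboth: "\<not> (p \<in> bsupp m \<and> q \<in> bsupp m)"
  proof
    assume "p \<in> bsupp m \<and> q \<in> bsupp m"
    then have "real (gdist UNIV GE p q) \<le> d" using simp unfolding rips_simplex_def by blast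
    then show False using gpq Nd by linarith
  qed
  have nonempty: "bsupp m \<noteq> {}" using simp unfolding rips_simplex_def by blast
  have "m = pt p \<or> m = pt q"
  proof -
    obtain a where a: "bsupp m = {a}" "a = p \<or> a = q"
      using sub notboth nonempty by blast
    then have "m a = 1" using sum1 by simp
    moreover have "m v = 0" if "v \<noteq> a" for v using a that by (auto simp: bsupp_def)
    ultimately have "m = pt a" by (auto simp: pt_def)
    then show ?thesis using a by auto
  qed
  then show False
  proof
    assume "m = pt p" then have "L / 2 = 0" using dpm met_facts[OF met pX pX, of p p] by auto
    then show False using Lpos by simp
  next
    assume "m = pt q" then have "L / 2 = L" using dpm L_def by simp
    then show False using Lpos by simp
  qed
qed


theorem corollary4p10:
  shows "\<exists>(V :: nat set) E. simple_graph V E \<and> connected_graph V E \<and>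
     (\<forall>n::nat. \<exists>u\<in>V. \<exists>v\<in>V. gdist V E u v > n) \<and>
     (\<exists>v\<in>V. infinite {w. E v w}) \<and>
     (\<exists>(T :: nat set) F. is_tree T F \<and> quasi_isometric V E T F) \<and>
     (\<forall>d::real. d > 0 \<longrightarrow> \<not> CAT0 (rips_points V E d) (rips_dist V E d))"
proof -
  have "\<forall>n::nat. \<exists>u\<in>UNIV. \<exists>v\<in>UNIV. gdist UNIV GE u v > n" using GE_diam by blast
  moreover have "\<exists>(T :: nat set) F. is_tree T F \<and> quasi_isometric UNIV GE T F"
    using PE_tree GE_QI by blast
  moreover have "\<forall>d::real. d > 0 \<longrightarrow> \<not> CAT0 (rips_points UNIV GE d) (rips_dist UNIV GE d)"
    using notCAT by blast
  ultimately show ?thesis using GE_simple GE_conn GE_inf by blast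
qed

end
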